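(* Let $\mathcal M=(h,M)$ be a polymatroid, $a\in M$, and $\alpha_1,\alpha_2\ge0$ real numbers with $\alpha_1+\alpha_2=h(a)$. Then there is a polymatroid $\mathcal M'=(h',\{a_1,a_2\}\cup(M\setminus\{a\}))$ (with $a_1,a_2$ new elements) such that $h'(a_i)=\alpha_i$ for $i=1,2$, and $\mathcal M$ is the factor of $\mathcal M'$ obtained by collapsing $a_1$ and $a_2$ to $a$ (i.e. $h'(A)=h(A)$ and $h'(a_1a_2A)=h(aA)$ for $A\subseteq M\setminus\{a\}$). Moreover, $\mathcal M$ is almost entropic if and only if $\mathcal M'$ is almost entropic.
   Context: A polymatroid $(h,M)$ consists of a finite set $M$ and a function $h$ on subsets of $M$ with $h(\emptyset)=0$ that is non-negative, monotone and submodular. It is almost entropic if, as a vector in $\mathbb R^{2^{|M|}-1}$, it lies in the closure of the entropic polymatroids (those of the form $A\mapsto\mathbf H(\xi_A)$ for jointly distributed discrete random variables). Juxtaposition denotes union, e.g. $a_1a_2A=\{a_1,a_2\}\cup A$. Given an equivalence relation $\cong$ on the ground set with quotient map $\phi$, the factor is the polymatroid $A\mapsto h(\phi^{-1}(A))$ on the set of classes. *)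

theory Defs
  imports "HOL-Probability.Probability"
begin

definition polymatroid :: "'a set \<Rightarrow> ('a set \<Rightarrow> real) \<Rightarrow> bool" where
  "polymatroid M h \<longleftrightarrow> finite M \<and> h {} = 0 \<and>
     (\<forall>A. A \<subseteq> M \<longrightarrow> 0 \<le> h A) \<and>
     (\<forall>A B. A \<subseteq> B \<and> B \<subseteq> M \<longrightarrow> h A \<le> h B) \<and>
     (\<forall>A B. A \<subseteq> M \<and> B \<subseteq> M \<longrightarrow> h (A \<union> B) + h (A \<inter> B) \<le> h A + h B)"

definition entropy_pmf :: "'b pmf \<Rightarrow> real" where
  "entropy_pmf q = - (\<Sum>x\<in>set_pmf q. pmf q x * log 2 (pmf q x))"

text \<open>Entropic: there are jointly distributed discrete (finite-valued) random
  variables \<xi>_i, i \<in> M (values labelled by naturals), given by their joint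
  distribution p, such that h A is the entropy of \<xi>_A for every A \<subseteq> M.\<close>
definition entropic :: "'a set \<Rightarrow> ('a set \<Rightarrow> real) \<Rightarrow> bool" where
  "entropic M h \<longleftrightarrow> (\<exists>p :: ('a \<Rightarrow> nat) pmf. finite (set_pmf p) \<and>
     (\<forall>A. A \<subseteq> M \<longrightarrow> h A = entropy_pmf (map_pmf (\<lambda>f. restrict f A) p)))"

definition almost_entropic :: "'a set \<Rightarrow> ('a set \<Rightarrow> real) \<Rightarrow> bool" where
  "almost_entropic M h \<longleftrightarrow> (\<forall>\<epsilon>>0. \<exists>g. entropic M g \<and>
     (\<forall>A. A \<subseteq> M \<longrightarrow> \<bar>h A - g A\<bar> < \<epsilon>))"

end

theory Submission imports Defs "HOL-Real_Asymp.Real_Asymp" begin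

lemma entropy_superset:
  assumes "finite S" "set_pmf p \<subseteq> S"
  shows "entropy_pmf p = - (\<Sum>x\<in>S. pmf p x * log 2 (pmf p x))"
  unfolding entropy_pmf_def
proof -
  have "(\<Sum>x\<in>set_pmf p. pmf p x * log 2 (pmf p x)) = (\<Sum>x\<in>S. pmf p x * log 2 (pmf p x))"
    by (rule sum.mono_neutral_left) (use assms in \<open>auto simp: set_pmf_iff\<close>)
  then show "- (\<Sum>x\<in>set_pmf p. pmf p x * log 2 (pmf p x)) = - (\<Sum>x\<in>S. pmf p x * log 2 (pmf p x))" by simp
qed

lemma entropy_map_inj:
  assumes "inj_on f (set_pmf p)"
  shows "entropy_pmf (map_pmf f p) = entropy_pmf p"
  unfolding entropy_pmf_def set_map_pmf
  using assms by (simp add: sum.reindex pmf_map_inj)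

lemma entropy_return: "entropy_pmf (return_pmf x) = 0"
  unfolding entropy_pmf_def by simp

lemma entropy_pair:
  assumes "finite (set_pmf p)" "finite (set_pmf q)"
  shows "entropy_pmf (pair_pmf p q) = entropy_pmf p + entropy_pmf q"
proof -
  let ?P = "set_pmf p" and ?Q = "set_pmf q"
  have s1: "(\<Sum>x\<in>?P. pmf p x) = 1" "(\<Sum>x\<in>?Q. pmf q x) = 1"
    using assms by (auto intro: sum_pmf_eq_1)
  have "(\<Sum>z\<in>set_pmf (pair_pmf p q). pmf (pair_pmf p q) z * log 2 (pmf (pair_pmf p q) z))
      = (\<Sum>x\<in>?P. \<Sum>y\<in>?Q. pmf p x * pmf q y * log 2 (pmf p x * pmf q y))"
    by (simp add: sum.cartesian_product pmf_pair split_beta flip: pmf_pair)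
  also have "\<dots> = (\<Sum>x\<in>?P. \<Sum>y\<in>?Q. pmf q y * (pmf p x * log 2 (pmf p x)) + pmf p x * (pmf q y * log 2 (pmf q y)))"
  proof (intro sum.cong refl)
    fix x y assume "x \<in> ?P" "y \<in> ?Q"
    then have "pmf p x > 0" "pmf q y > 0" by (auto simp: set_pmf_eq')
    then show "pmf p x * pmf q y * log 2 (pmf p x * pmf q y) = pmf q y * (pmf p x * log 2 (pmf p x)) + pmf p x * (pmf q y * log 2 (pmf q y))"
      by (simp add: log_mult algebra_simps)
  qed
  also have "\<dots> = (\<Sum>x\<in>?P. pmf p x * log 2 (pmf p x)) + (\<Sum>y\<in>?Q. pmf q y * log 2 (pmf q y))"
    by (simp add: sum.distrib sum_distrib_left[symmetric] sum_distrib_right[symmetric] s1 sum.swap[of _ ?P ?Q])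
  finally show ?thesis unfolding entropy_pmf_def by simp
qed

definition hb :: "real \<Rightarrow> real" where
  "hb d = - d * log 2 d - (1 - d) * log 2 (1 - d)"

lemma entropy_mix:
  fixes q :: "'b pmf" and d :: real
  assumes fin: "finite (set_pmf q)" and d: "0 < d" "d < 1"
  defines "D \<equiv> map_pmf (\<lambda>(b,r). if b then Some r else None) (pair_pmf (bernoulli_pmf d) q)"
  shows "entropy_pmf D = d * entropy_pmf q + hb d"
proof -
  let ?Q = "set_pmf q"
  define S where "S = insert None (Some ` ?Q)"
  have finS: "finite S" using fin by (simp add: S_def)
  have sub: "set_pmf D \<subseteq> S" unfolding D_def S_def by auto
  have pS: "pmf D (Some r) = d * pmf q r" for r
  proof -
    have "(\<lambda>(b,r). if b then Some r else None) -` {Some r} = {(True, r)}"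
      by (auto split: if_splits)
    then show ?thesis unfolding D_def pmf_map
      using d by (simp add: measure_pmf_single pmf_pair)
  qed
  have s1: "(\<Sum>x\<in>?Q. pmf q x) = 1" using fin by (auto intro: sum_pmf_eq_1)
  have "(\<Sum>x\<in>S. pmf D x) = 1" using finS sub by (rule sum_pmf_eq_1)
  then have "pmf D None + (\<Sum>r\<in>?Q. pmf D (Some r)) = 1"
    unfolding S_def using fin by (simp add: sum.reindex inj_on_def)
  then have pN: "pmf D None = 1 - d"
    by (simp add: pS sum_distrib_left[symmetric] s1)
  have "entropy_pmf D = - (\<Sum>x\<in>S. pmf D x * log 2 (pmf D x))"
    by (rule entropy_superset[OF finS sub])
  also have "\<dots> = - ((1 - d) * log 2 (1 - d) + (\<Sum>r\<in>?Q. d * pmf q r * log 2 (d * pmf q r)))"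
    unfolding S_def using fin by (simp add: sum.reindex inj_on_def pS pN)
  also have "(\<Sum>r\<in>?Q. d * pmf q r * log 2 (d * pmf q r))
     = (\<Sum>r\<in>?Q. (d * log 2 d) * pmf q r + d * (pmf q r * log 2 (pmf q r)))"
  proof (intro sum.cong refl)
    fix r assume "r \<in> ?Q"
    then have "pmf q r > 0" by (auto simp: set_pmf_eq')
    then show "d * pmf q r * log 2 (d * pmf q r) = (d * log 2 d) * pmf q r + d * (pmf q r * log 2 (pmf q r))"
      using d by (simp add: log_mult algebra_simps)
  qed
  also have "\<dots> = d * log 2 d + d * (\<Sum>r\<in>?Q. pmf q r * log 2 (pmf q r))"
    by (simp add: sum.distrib sum_distrib_left[symmetric] s1)
  finally show ?thesis unfolding entropy_pmf_def hb_def by (simp add: algebra_simps)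
qed

lemma entropy_restrict_relabel:
  assumes "inj_on K (extensional S)"
  shows "entropy_pmf (map_pmf (\<lambda>f. K (restrict f S)) p) = entropy_pmf (map_pmf (\<lambda>f. restrict f S) p)"
proof -
  have "map_pmf (\<lambda>f. K (restrict f S)) p = map_pmf K (map_pmf (\<lambda>f. restrict f S) p)"
    by (simp add: map_pmf_comp)
  moreover have "inj_on K (set_pmf (map_pmf (\<lambda>f. restrict f S) p))"
    by (rule inj_on_subset[OF assms]) auto
  ultimately show ?thesis by (simp add: entropy_map_inj)
qed

lemma entropic_cong: "entropic N g \<Longrightarrow> (\<And>A. A \<subseteq> N \<Longrightarrow> g A = g' A) \<Longrightarrow> entropic N g'"
  unfolding entropic_def by metis

lemma map_restrict_empty: "map_pmf (\<lambda>f. restrict f {}) p = return_pmf (\<lambda>_. undefined)"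
  by (simp add: restrict_def)

lemma entropic_empty: "entropic N g \<Longrightarrow> g {} = 0"
  unfolding entropic_def by (auto simp: entropy_return map_restrict_empty)

lemma entropic_zero: "entropic N (\<lambda>A. 0)"
  unfolding entropic_def
  by (rule exI[of _ "return_pmf (\<lambda>_. 0)"]) (simp add: entropy_return)

lemma entropic_add:
  assumes "entropic N g1" "entropic N g2"
  shows "entropic N (\<lambda>A. g1 A + g2 A)"
proof -
  obtain p1 :: "('a \<Rightarrow> nat) pmf" where p1: "finite (set_pmf p1)"
    "\<And>A. A \<subseteq> N \<Longrightarrow> g1 A = entropy_pmf (map_pmf (\<lambda>f. restrict f A) p1)"
    using assms(1) unfolding entropic_def by blast
  obtain p2 :: "('a \<Rightarrow> nat) pmf" where p2: "finite (set_pmf p2)"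
    "\<And>A. A \<subseteq> N \<Longrightarrow> g2 A = entropy_pmf (map_pmf (\<lambda>f. restrict f A) p2)"
    using assms(2) unfolding entropic_def by blast
  define p where "p = map_pmf (\<lambda>(f1,f2) x. prod_encode (f1 x, f2 x)) (pair_pmf p1 p2)"
  have "finite (set_pmf p)" using p1(1) p2(1) by (simp add: p_def)
  moreover have "g1 A + g2 A = entropy_pmf (map_pmf (\<lambda>f. restrict f A) p)" if "A \<subseteq> N" for A
  proof -
    define K where "K = (\<lambda>(r1, r2). restrict (\<lambda>x. prod_encode (r1 x, r2 x)) A)"
    have "map_pmf (\<lambda>f. restrict f A) p = map_pmf K (pair_pmf (map_pmf (\<lambda>f. restrict f A) p1) (map_pmf (\<lambda>f. restrict f A) p2))"
      unfolding p_def K_def map_pair[symmetric] map_pmf_comp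
      by (intro map_pmf_cong refl) (auto simp: restrict_def fun_eq_iff)
    moreover have "inj_on K (set_pmf (pair_pmf (map_pmf (\<lambda>f. restrict f A) p1) (map_pmf (\<lambda>f. restrict f A) p2)))"
    proof (rule inj_onI, clarsimp)
      fix f1 f2 f1' f2'
      assume eq: "K (restrict f1 A, restrict f2 A) = K (restrict f1' A, restrict f2' A)"
      have "restrict f1 A = restrict f1' A \<and> restrict f2 A = restrict f2' A"
      proof (intro conjI ext)
        fix x show "restrict f1 A x = restrict f1' A x"
          using fun_cong[OF eq, of x] by (cases "x \<in> A") (auto simp: K_def)
      next
        fix x show "restrict f2 A x = restrict f2' A x"
          using fun_cong[OF eq, of x] by (cases "x \<in> A") (auto simp: K_def)
      qed
      then show "restrict f1 A = restrict f1' A \<and> restrict f2 A = restrict f2' A" .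
    qed
    ultimately have "entropy_pmf (map_pmf (\<lambda>f. restrict f A) p) = entropy_pmf (pair_pmf (map_pmf (\<lambda>f. restrict f A) p1) (map_pmf (\<lambda>f. restrict f A) p2))"
      by (simp add: entropy_map_inj)
    also have "\<dots> = g1 A + g2 A"
      using p1 p2 that by (simp add: entropy_pair)
    finally show ?thesis by simp
  qed
  ultimately show ?thesis unfolding entropic_def by blast
qed

lemma entropic_scale:
  assumes "entropic N g"
  shows "entropic N (\<lambda>A. real k * g A)"
proof (induction k)
  case 0 then show ?case using entropic_zero by simp
next
  case (Suc k)
  from entropic_add[OF Suc assms] show ?case
    by (rule entropic_cong) (simp add: algebra_simps)
qed

lemma entropic_mix:
  assumes "entropic N g" "0 < d" "d < 1"
  shows "entropic N (\<lambda>A. if A = {} then 0 else d * g A + hb d)"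
proof -
  obtain p :: "('a \<Rightarrow> nat) pmf" where p: "finite (set_pmf p)"
    "\<And>A. A \<subseteq> N \<Longrightarrow> g A = entropy_pmf (map_pmf (\<lambda>f. restrict f A) p)"
    using assms(1) unfolding entropic_def by blast
  define p' where "p' = map_pmf (\<lambda>(b,f). if b then (\<lambda>x. f x + 1) else (\<lambda>_. 0::nat)) (pair_pmf (bernoulli_pmf d) p)"
  have "finite (set_pmf p')" using p(1) assms by (simp add: p'_def)
  moreover have "(if A = {} then 0 else d * g A + hb d) = entropy_pmf (map_pmf (\<lambda>f. restrict f A) p')"
    if "A \<subseteq> N" for A
  proof (cases "A = {}")
    case True
    then show ?thesis by (simp add: entropy_return map_restrict_empty)
  next
    case False
    define q where "q = map_pmf (\<lambda>f. restrict f A) p"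
    define D where "D = map_pmf (\<lambda>(b,r). if b then Some r else None) (pair_pmf (bernoulli_pmf d) q)"
    define E where "E = (\<lambda>z. case z of None \<Rightarrow> restrict (\<lambda>_. 0::nat) A | Some r \<Rightarrow> restrict (\<lambda>x. r x + 1) A)"
    have "map_pmf (\<lambda>f. restrict f A) p' = map_pmf E D"
      unfolding p'_def D_def q_def E_def pair_map_pmf2 map_pmf_comp
      by (intro map_pmf_cong refl) (auto simp: restrict_def fun_eq_iff)
    moreover have "inj_on E (set_pmf D)"
    proof (rule inj_onI)
      fix z z' assume z: "z \<in> set_pmf D" "z' \<in> set_pmf D" and eq: "E z = E z'"
      obtain x0 where x0: "x0 \<in> A" using False by auto
      have ext: "\<And>r. Some r \<in> set_pmf D \<Longrightarrow> r \<in> extensional A"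
        unfolding D_def q_def by (auto split: if_splits)
      show "z = z'"
      proof (cases z; cases z')
        fix r r' assume zz: "z = Some r" "z' = Some r'"
        have "r = r'"
        proof (rule extensionalityI[of _ A])
          show "r \<in> extensional A" "r' \<in> extensional A" using ext z zz by auto
          fix x assume "x \<in> A" then show "r x = r' x"
            using fun_cong[OF eq, of x] zz by (simp add: E_def)
        qed
        then show ?thesis using zz by simp
      qed (use fun_cong[OF eq, of x0] x0 in \<open>auto simp: E_def\<close>)
    qed
    ultimately have "entropy_pmf (map_pmf (\<lambda>f. restrict f A) p') = entropy_pmf D"
      by (simp add: entropy_map_inj)
    also have "\<dots> = d * entropy_pmf q + hb d"
      unfolding D_def using assms p(1) by (intro entropy_mix) (auto simp: q_def)
    finally show ?thesis using False p(2)[OF that] by (simp add: q_def)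
  qed
  ultimately show ?thesis unfolding entropic_def by blast
qed

lemma hb_lim: "(\<lambda>n::nat. hb (1 / real n)) \<longlonglongrightarrow> 0"
  unfolding hb_def by real_asymp

lemma entropic_convex:
  assumes "finite N" "entropic N g1" "entropic N g2" "0 \<le> t" "t \<le> 1" "e > 0"
  shows "\<exists>G. entropic N G \<and> (\<forall>A. A \<subseteq> N \<longrightarrow> \<bar>t * g1 A + (1 - t) * g2 A - G A\<bar> < e)"
proof -
  define C where "C = (\<Sum>A\<in>Pow N. \<bar>g1 A\<bar> + \<bar>g2 A\<bar>)"
  have Cb: "\<bar>g1 A\<bar> + \<bar>g2 A\<bar> \<le> C" if "A \<subseteq> N" for A
    unfolding C_def using assms(1) that
    by (intro member_le_sum) auto
  have C0: "C \<ge> 0" unfolding C_def by (intro sum_nonneg) auto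
  have ev1: "eventually (\<lambda>n::nat. \<bar>hb (1 / real n)\<bar> < e/2) sequentially"
    using hb_lim assms(6) by (auto simp: tendsto_iff dist_real_def dest!: spec[of _ "e/2"])
  have "(\<lambda>n::nat. C / real n) \<longlonglongrightarrow> 0" by real_asymp
  then have ev2: "eventually (\<lambda>n::nat. \<bar>C / real n\<bar> < e/2) sequentially"
    using assms(6) by (auto simp: tendsto_iff dist_real_def dest!: spec[of _ "e/2"])
  obtain n :: nat where n: "n \<ge> 2" "\<bar>hb (1 / real n)\<bar> < e/2" "\<bar>C / real n\<bar> < e/2"
    using eventually_conj[OF eventually_conj[OF eventually_ge_at_top[of 2] ev1] ev2]
    unfolding eventually_sequentially by blast
  define d where "d = 1 / real n"
  define K where "K = nat \<lfloor>t * real n\<rfloor>"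
  define J where "J = n - K"
  have tn: "0 \<le> t * real n" using assms by simp
  have K1: "real K \<le> t * real n" "t * real n < real K + 1"
    unfolding K_def using tn by linarith+
  have Kn: "K \<le> n"
  proof -
    have "t * real n \<le> real n" using assms(5) mult_right_mono[of t 1 "real n"] by simp
    then show ?thesis using K1 by linarith
  qed
  have J: "real J = real n - real K" using Kn by (simp add: J_def)
  have d: "0 < d" "d < 1" using n(1) by (auto simp: d_def)
  define G where "G = (\<lambda>A. if A = {} then 0 else d * (real K * g1 A + real J * g2 A) + hb d)"
  have "entropic N G"
    unfolding G_def
    by (intro entropic_mix entropic_add entropic_scale assms d)
  moreover have "\<bar>t * g1 A + (1 - t) * g2 A - G A\<bar> < e" if A: "A \<subseteq> N" for A
  proof (cases "A = {}")
    case True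
    then show ?thesis using entropic_empty[OF assms(2)] entropic_empty[OF assms(3)] assms(6)
      by (simp add: G_def)
  next
    case False
    define x where "x = t - real K / real n"
    have nn: "real n > 0" using n(1) by simp
    have x1: "x = (t * real n - real K) / real n" unfolding x_def using nn by (simp add: field_simps)
    have x: "0 \<le> x" "x \<le> 1 / real n" unfolding x1 using K1 nn
      by (auto intro: divide_right_mono)
    have dK: "d * real K = t - x" "d * real J = 1 - t + x" using n(1) unfolding x_def d_def J
      by (auto simp: field_simps)
    have "t * g1 A + (1 - t) * g2 A - G A = x * g1 A - x * g2 A - hb d"
    proof -
      have "d * (real K * g1 A + real J * g2 A) = (d * real K) * g1 A + (d * real J) * g2 A"
        by (simp add: algebra_simps)
      then show ?thesis using False unfolding G_def dK by (simp add: algebra_simps)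
    qed
    also have "\<bar>\<dots>\<bar> \<le> x * (\<bar>g1 A\<bar> + \<bar>g2 A\<bar>) + \<bar>hb d\<bar>"
    proof -
      have "x * g1 A \<le> x * \<bar>g1 A\<bar>" "x * (- g1 A) \<le> x * \<bar>g1 A\<bar>"
           "x * g2 A \<le> x * \<bar>g2 A\<bar>" "x * (- g2 A) \<le> x * \<bar>g2 A\<bar>"
        using x(1) by (intro mult_left_mono; simp)+
      then show ?thesis by (simp add: algebra_simps abs_le_iff) linarith
    qed
    also have "x * (\<bar>g1 A\<bar> + \<bar>g2 A\<bar>) \<le> (1 / real n) * C"
      using x Cb[OF A] by (intro mult_mono) auto
    also have "(1 / real n) * C < e / 2" using n(3) C0 by simp
    finally show ?thesis using n(2) by (simp add: d_def)
  qed
  ultimately show ?thesis by blast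
qed

lemma polymatroid_comp:
  assumes "polymatroid M h" "finite N"
    and "\<And>B. B \<subseteq> N \<Longrightarrow> \<phi> B \<subseteq> M" "\<phi> {} = {}"
    and "\<And>B C. B \<subseteq> C \<Longrightarrow> C \<subseteq> N \<Longrightarrow> \<phi> B \<subseteq> \<phi> C"
    and "\<And>B C. B \<subseteq> N \<Longrightarrow> C \<subseteq> N \<Longrightarrow> \<phi> (B \<union> C) = \<phi> B \<union> \<phi> C"
  shows "polymatroid N (\<lambda>B. h (\<phi> B))"
proof -
  have h: "finite M" "h {} = 0" "\<And>A. A \<subseteq> M \<Longrightarrow> 0 \<le> h A"
    "\<And>A B. A \<subseteq> B \<Longrightarrow> B \<subseteq> M \<Longrightarrow> h A \<le> h B"
    "\<And>A B. A \<subseteq> M \<Longrightarrow> B \<subseteq> M \<Longrightarrow> h (A \<union> B) + h (A \<inter> B) \<le> h A + h B"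
    using assms(1) unfolding polymatroid_def by blast+
  show ?thesis unfolding polymatroid_def
  proof (intro conjI allI impI)
    fix B C assume BC: "B \<subseteq> N \<and> C \<subseteq> N"
    have "h (\<phi> (B \<inter> C)) \<le> h (\<phi> B \<inter> \<phi> C)"
      using BC assms(3,5) by (intro h(4)) (auto intro!: Int_greatest dest: assms(5)[of "B \<inter> C" B] assms(5)[of "B \<inter> C" C])
    moreover have "h (\<phi> B \<union> \<phi> C) + h (\<phi> B \<inter> \<phi> C) \<le> h (\<phi> B) + h (\<phi> C)"
      using BC assms(3) by (intro h(5)) auto
    ultimately show "h (\<phi> (B \<union> C)) + h (\<phi> (B \<inter> C)) \<le> h (\<phi> B) + h (\<phi> C)"
      using assms(6) BC by simp
  qed (use assms h in \<open>auto\<close>)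
qed

lemma polymatroid_convex:
  assumes "polymatroid N f1" "polymatroid N f2" "0 \<le> t" "t \<le> 1"
  shows "polymatroid N (\<lambda>B. t * f1 B + (1 - t) * f2 B)"
proof -
  have f1: "finite N" "f1 {} = 0" "\<And>A. A \<subseteq> N \<Longrightarrow> 0 \<le> f1 A"
    "\<And>A B. A \<subseteq> B \<Longrightarrow> B \<subseteq> N \<Longrightarrow> f1 A \<le> f1 B"
    "\<And>A B. A \<subseteq> N \<Longrightarrow> B \<subseteq> N \<Longrightarrow> f1 (A \<union> B) + f1 (A \<inter> B) \<le> f1 A + f1 B"
    using assms(1) unfolding polymatroid_def by blast+
  have f2: "f2 {} = 0" "\<And>A. A \<subseteq> N \<Longrightarrow> 0 \<le> f2 A"
    "\<And>A B. A \<subseteq> B \<Longrightarrow> B \<subseteq> N \<Longrightarrow> f2 A \<le> f2 B"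
    "\<And>A B. A \<subseteq> N \<Longrightarrow> B \<subseteq> N \<Longrightarrow> f2 (A \<union> B) + f2 (A \<inter> B) \<le> f2 A + f2 B"
    using assms(2) unfolding polymatroid_def by blast+
  have t: "0 \<le> 1 - t" using assms by simp
  show ?thesis unfolding polymatroid_def
  proof (intro conjI allI impI)
    fix A assume "A \<subseteq> N" then show "0 \<le> t * f1 A + (1 - t) * f2 A"
      using f1(3) f2(2) assms(3) t by simp
  next
    fix A B assume "A \<subseteq> B \<and> B \<subseteq> N"
    then show "t * f1 A + (1 - t) * f2 A \<le> t * f1 B + (1 - t) * f2 B"
      using f1(4)[of A B] f2(3)[of A B] assms(3) t by (intro add_mono mult_left_mono) auto
  next
    fix A B assume AB: "A \<subseteq> N \<and> B \<subseteq> N"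
    have "t * (f1 (A \<union> B) + f1 (A \<inter> B)) \<le> t * (f1 A + f1 B)"
      using f1(5)[of A B] AB assms(3) by (intro mult_left_mono) auto
    moreover have "(1-t) * (f2 (A \<union> B) + f2 (A \<inter> B)) \<le> (1-t) * (f2 A + f2 B)"
      using f2(4)[of A B] AB t by (intro mult_left_mono) auto
    ultimately show "t * f1 (A \<union> B) + (1 - t) * f2 (A \<union> B) + (t * f1 (A \<inter> B) + (1 - t) * f2 (A \<inter> B))
         \<le> t * f1 A + (1 - t) * f2 A + (t * f1 B + (1 - t) * f2 B)"
      by (simp add: algebra_simps)
  qed (use f1 f2 in auto)
qed

lemma entropic_split:
  assumes "entropic M g" "a \<in> M" "a1 \<notin> M" "a2 \<notin> M" "a1 \<noteq> a2"
  shows "entropic ({a1, a2} \<union> (M - {a})) (\<lambda>B. g ((B - {a1, a2}) \<union> (if a1 \<in> B then {a} else {})))"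
proof -
  obtain p :: "('a \<Rightarrow> nat) pmf" where p: "finite (set_pmf p)"
    "\<And>A. A \<subseteq> M \<Longrightarrow> g A = entropy_pmf (map_pmf (\<lambda>f. restrict f A) p)"
    using assms(1) unfolding entropic_def by blast
  define T where "T = (\<lambda>(f::'a \<Rightarrow> nat) x. if x = a1 then f a else if x = a2 then 0 else f x)"
  define p1 where "p1 = map_pmf T p"
  have "finite (set_pmf p1)" using p(1) by (simp add: p1_def)
  moreover have "g ((B - {a1, a2}) \<union> (if a1 \<in> B then {a} else {})) = entropy_pmf (map_pmf (\<lambda>f. restrict f B) p1)"
    if B: "B \<subseteq> {a1, a2} \<union> (M - {a})" for B
  proof -
    define S where "S = (B - {a1, a2}) \<union> (if a1 \<in> B then {a} else {})"
    have SM: "S \<subseteq> M" using B assms(2) by (auto simp: S_def)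
    have aS: "a \<in> S \<longleftrightarrow> a1 \<in> B" using B assms by (auto simp: S_def)
    define K where "K = (\<lambda>r::'a \<Rightarrow> nat. restrict (\<lambda>x. if x = a1 then r a else if x = a2 then 0 else r x) B)"
    have "map_pmf (\<lambda>f. restrict f B) p1 = map_pmf (\<lambda>f. K (restrict f S)) p"
      unfolding p1_def map_pmf_comp
    proof (intro map_pmf_cong refl ext)
      fix f x show "restrict (T f) B x = K (restrict f S) x"
        using aS unfolding K_def T_def by (auto simp: S_def)
    qed
    moreover have "inj_on K (extensional S)"
    proof (rule inj_onI)
      fix r r' assume r: "r \<in> extensional S" "r' \<in> extensional S" and eq: "K r = K r'"
      show "r = r'"
      proof (rule extensionalityI[OF r])
        fix y assume y: "y \<in> S"
        show "r y = r' y"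
        proof (cases "y = a")
          case True
          then have "a1 \<in> B" using aS y by simp
          then show ?thesis using fun_cong[OF eq, of a1] True by (simp add: K_def)
        next
          case False
          then have "y \<in> B" "y \<noteq> a1" "y \<noteq> a2" using y by (auto simp: S_def split: if_splits)
          then show ?thesis using fun_cong[OF eq, of y] by (simp add: K_def)
        qed
      qed
    qed
    ultimately have "g S = entropy_pmf (map_pmf (\<lambda>f. restrict f B) p1)"
      using p(2)[OF SM] entropy_restrict_relabel[of K S p] by simp
    then show ?thesis unfolding S_def .
  qed
  ultimately show ?thesis unfolding entropic_def by blast
qed

lemma entropic_factor:
  assumes "entropic ({a1, a2} \<union> (M - {a})) g" "a \<in> M" "a1 \<notin> M" "a2 \<notin> M" "a1 \<noteq> a2"
  shows "entropic M (\<lambda>B. g (if a \<in> B then {a1, a2} \<union> (B - {a}) else B))"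
proof -
  obtain p :: "('a \<Rightarrow> nat) pmf" where p: "finite (set_pmf p)"
    "\<And>A. A \<subseteq> {a1, a2} \<union> (M - {a}) \<Longrightarrow> g A = entropy_pmf (map_pmf (\<lambda>f. restrict f A) p)"
    using assms(1) unfolding entropic_def by blast
  define T where "T = (\<lambda>(f::'a \<Rightarrow> nat) x. if x = a then prod_encode (f a1, f a2) else f x)"
  define p1 where "p1 = map_pmf T p"
  have "finite (set_pmf p1)" using p(1) by (simp add: p1_def)
  moreover have "g (if a \<in> B then {a1, a2} \<union> (B - {a}) else B) = entropy_pmf (map_pmf (\<lambda>f. restrict f B) p1)"
    if B: "B \<subseteq> M" for B
  proof -
    define S where "S = (if a \<in> B then {a1, a2} \<union> (B - {a}) else B)"
    have SM: "S \<subseteq> {a1, a2} \<union> (M - {a})" using B by (auto simp: S_def)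
    have a12: "a \<in> B \<Longrightarrow> a1 \<in> S \<and> a2 \<in> S" by (simp add: S_def)
    have BS: "x \<in> B \<Longrightarrow> x \<noteq> a \<Longrightarrow> x \<in> S" for x by (auto simp: S_def)
    have SB: "y \<in> S \<Longrightarrow> y \<noteq> a1 \<Longrightarrow> y \<noteq> a2 \<Longrightarrow> y \<in> B \<and> y \<noteq> a" for y
      using B assms by (auto simp: S_def split: if_splits)
    have Sa: "y \<in> S \<Longrightarrow> (y = a1 \<or> y = a2) \<Longrightarrow> a \<in> B" for y
      using B assms by (auto simp: S_def split: if_splits)
    define K where "K = (\<lambda>r::'a \<Rightarrow> nat. restrict (\<lambda>x. if x = a then prod_encode (r a1, r a2) else r x) B)"
    have "map_pmf (\<lambda>f. restrict f B) p1 = map_pmf (\<lambda>f. K (restrict f S)) p"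
      unfolding p1_def map_pmf_comp
    proof (intro map_pmf_cong refl ext)
      fix f x show "restrict (T f) B x = K (restrict f S) x"
        using a12 BS unfolding K_def T_def by auto
    qed
    moreover have "inj_on K (extensional S)"
    proof (rule inj_onI)
      fix r r' assume r: "r \<in> extensional S" "r' \<in> extensional S" and eq: "K r = K r'"
      show "r = r'"
      proof (rule extensionalityI[OF r])
        fix y assume y: "y \<in> S"
        show "r y = r' y"
        proof (cases "y = a1 \<or> y = a2")
          case True
          then have "a \<in> B" using Sa y by blast
          then have "prod_encode (r a1, r a2) = prod_encode (r' a1, r' a2)"
            using fun_cong[OF eq, of a] by (simp add: K_def)
          then show ?thesis using True by (auto simp: prod_encode_eq)
        next
          case False
          then have "y \<in> B" "y \<noteq> a" using SB y by auto
          then show ?thesis using fun_cong[OF eq, of y] by (simp add: K_def)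
        qed
      qed
    qed
    ultimately have "g S = entropy_pmf (map_pmf (\<lambda>f. restrict f B) p1)"
      using p(2)[OF SM] entropy_restrict_relabel[of K S p] by simp
    then show ?thesis unfolding S_def .
  qed
  ultimately show ?thesis unfolding entropic_def by blast
qed

theorem lemma2p10:
  fixes M :: "'a set" and h :: "'a set \<Rightarrow> real" and a a1 a2 :: 'a
    and \<alpha>1 \<alpha>2 :: real
  assumes "polymatroid M h" and "a \<in> M"
    and "\<alpha>1 \<ge> 0" and "\<alpha>2 \<ge> 0" and "\<alpha>1 + \<alpha>2 = h {a}"
    and "a1 \<notin> M" and "a2 \<notin> M" and "a1 \<noteq> a2"
  shows "\<exists>h'. polymatroid ({a1, a2} \<union> (M - {a})) h' \<and>
           h' {a1} = \<alpha>1 \<and> h' {a2} = \<alpha>2 \<and>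
           (\<forall>A. A \<subseteq> M - {a} \<longrightarrow> h' A = h A \<and> h' ({a1, a2} \<union> A) = h (insert a A)) \<and>
           (almost_entropic M h \<longleftrightarrow> almost_entropic ({a1, a2} \<union> (M - {a})) h')"
proof -
  note pm = assms(1) and aM = assms(2) and a1M = assms(6) and a2M = assms(7) and a12 = assms(8)
  define M' where "M' = {a1, a2} \<union> (M - {a})"
  have M'2: "{a2, a1} \<union> (M - {a}) = M'" by (auto simp: M'_def)
  have finM: "finite M" using pm by (simp add: polymatroid_def)
  have h0: "h {} = 0" using pm by (simp add: polymatroid_def)
  have finM': "finite M'" using finM by (simp add: M'_def)
  define \<phi>1 where "\<phi>1 = (\<lambda>B. (B - {a1, a2}) \<union> (if a1 \<in> B then {a} else {}))"
  define \<phi>2 where "\<phi>2 = (\<lambda>B. (B - {a2, a1}) \<union> (if a2 \<in> B then {a} else {}))"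
  define t where "t = \<alpha>1 / h {a}"
  have t: "0 \<le> t" "t \<le> 1" using assms(3,4,5) by (auto simp: t_def divide_le_eq_1)
  have ta: "t * h {a} = \<alpha>1" using assms(3,4,5) by (auto simp: t_def)
  define h' where "h' = (\<lambda>B. t * h (\<phi>1 B) + (1 - t) * h (\<phi>2 B))"
  have p1: "polymatroid M' (\<lambda>B. h (\<phi>1 B))"
    by (rule polymatroid_comp[OF pm finM']) (use aM in \<open>auto simp: \<phi>1_def M'_def\<close>)
  have p2: "polymatroid M' (\<lambda>B. h (\<phi>2 B))"
    by (rule polymatroid_comp[OF pm finM']) (use aM in \<open>auto simp: \<phi>2_def M'_def\<close>)
  have poly: "polymatroid M' h'"
    unfolding h'_def by (rule polymatroid_convex[OF p1 p2 t])
  have ha1: "h' {a1} = \<alpha>1" using a12 ta h0 by (simp add: h'_def \<phi>1_def \<phi>2_def)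
  have ha2: "h' {a2} = \<alpha>2" using a12 ta h0 assms(5) by (simp add: h'_def \<phi>1_def \<phi>2_def algebra_simps)
  have hA: "h' A = h A \<and> h' ({a1, a2} \<union> A) = h (insert a A)" if "A \<subseteq> M - {a}" for A
  proof -
    have "a1 \<notin> A" "a2 \<notin> A" using that a1M a2M by auto
    then have "\<phi>1 A = A" "\<phi>2 A = A" "\<phi>1 ({a1, a2} \<union> A) = insert a A" "\<phi>2 ({a1, a2} \<union> A) = insert a A"
      by (auto simp: \<phi>1_def \<phi>2_def)
    then show ?thesis by (simp add: h'_def algebra_simps)
  qed
  have "almost_entropic M h \<longleftrightarrow> almost_entropic M' h'"
  proof
    assume ae: "almost_entropic M h"
    show "almost_entropic M' h'" unfolding almost_entropic_def
    proof (intro allI impI)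
      fix e :: real assume e: "e > 0"
      obtain g where g: "entropic M g" "\<And>A. A \<subseteq> M \<Longrightarrow> \<bar>h A - g A\<bar> < e/2"
        using ae e unfolding almost_entropic_def by (meson half_gt_zero)
      have g1: "entropic M' (\<lambda>B. g (\<phi>1 B))"
        using entropic_split[OF g(1) aM a1M a2M a12] by (simp add: M'_def \<phi>1_def)
      have g2: "entropic M' (\<lambda>B. g (\<phi>2 B))"
        using entropic_split[OF g(1) aM a2M a1M a12[symmetric]] M'2 by (simp add: \<phi>2_def)
      obtain G where G: "entropic M' G"
        "\<And>A. A \<subseteq> M' \<Longrightarrow> \<bar>t * g (\<phi>1 A) + (1 - t) * g (\<phi>2 A) - G A\<bar> < e/2"
        using entropic_convex[OF finM' g1 g2 t, of "e/2"] e by auto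
      show "\<exists>G. entropic M' G \<and> (\<forall>A. A \<subseteq> M' \<longrightarrow> \<bar>h' A - G A\<bar> < e)"
      proof (intro exI conjI allI impI)
        show "entropic M' G" by (rule G(1))
        fix A assume A: "A \<subseteq> M'"
        have s1: "\<phi>1 A \<subseteq> M" "\<phi>2 A \<subseteq> M" using A aM by (auto simp: \<phi>1_def \<phi>2_def M'_def)
        define x where "x = h (\<phi>1 A) - g (\<phi>1 A)"
        define y where "y = h (\<phi>2 A) - g (\<phi>2 A)"
        have x: "\<bar>x\<bar> < e/2" "\<bar>y\<bar> < e/2" using g(2) s1 by (auto simp: x_def y_def)
        have "\<bar>t * x + (1 - t) * y\<bar> \<le> t * \<bar>x\<bar> + (1 - t) * \<bar>y\<bar>"
          using t by (simp add: abs_triangle_ineq[THEN order_trans] abs_mult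
              order_trans[OF abs_triangle_ineq])
        also have "\<dots> \<le> t * (e/2) + (1 - t) * (e/2)"
          using t x by (intro add_mono mult_left_mono) auto
        also have "t * (e/2) + (1 - t) * (e/2) = e/2" by (simp add: field_simps)
        finally have "\<bar>t * x + (1 - t) * y\<bar> \<le> e/2" .
        moreover have "h' A - G A = (t * x + (1 - t) * y) + (t * g (\<phi>1 A) + (1 - t) * g (\<phi>2 A) - G A)"
          by (simp add: h'_def x_def y_def algebra_simps)
        ultimately show "\<bar>h' A - G A\<bar> < e" using G(2)[OF A] by linarith
      qed
    qed
  next
    assume ae: "almost_entropic M' h'"
    show "almost_entropic M h" unfolding almost_entropic_def
    proof (intro allI impI)
      fix e :: real assume e: "e > 0"
      obtain g where g: "entropic M' g" "\<And>A. A \<subseteq> M' \<Longrightarrow> \<bar>h' A - g A\<bar> < e"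
        using ae e unfolding almost_entropic_def by meson
      define \<psi> where "\<psi> = (\<lambda>B. if a \<in> B then {a1, a2} \<union> (B - {a}) else B)"
      have ge: "entropic M (\<lambda>B. g (\<psi> B))"
        using entropic_factor[OF g(1)[unfolded M'_def] aM a1M a2M a12] by (simp add: \<psi>_def)
      show "\<exists>G. entropic M G \<and> (\<forall>A. A \<subseteq> M \<longrightarrow> \<bar>h A - G A\<bar> < e)"
      proof (intro exI conjI allI impI)
        show "entropic M (\<lambda>B. g (\<psi> B))" by (rule ge)
        fix A assume A: "A \<subseteq> M"
        have sA: "\<psi> A \<subseteq> M'" using A by (auto simp: \<psi>_def M'_def)
        have "h' (\<psi> A) = h A"
        proof (cases "a \<in> A")
          case True
          then have "insert a (A - {a}) = A" by auto
          moreover have "A - {a} \<subseteq> M - {a}" using A by auto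
          ultimately show ?thesis using hA[of "A - {a}"] True by (simp add: \<psi>_def)
        next
          case False
          then show ?thesis using hA[of A] A by (auto simp: \<psi>_def)
        qed
        then show "\<bar>h A - g (\<psi> A)\<bar> < e" using g(2)[OF sA] by simp
      qed
    qed
  qed
  then show ?thesis
    using poly ha1 ha2 hA unfolding M'_def by blast
qed

end
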